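(* Let $G=\mathrm{srg}(n,k,\lambda,\mu)$ be a strongly regular graph with $\mu\ge1$. Then \[ \mathrm{QEC}(G)=-2-\frac{\lambda-\mu-\sqrt{(\lambda-\mu)^2+4(k-\mu)}}{2}. \]
   Context: A graph $G=(V,E)$ is finite and simple. It is strongly regular with parameters $\mathrm{srg}(n,k,\lambda,\mu)$ if $|V|=n$, every vertex has exactly $k$ neighbours, every two adjacent vertices have exactly $\lambda$ common neighbours, and every two distinct non-adjacent vertices have exactly $\mu$ common neighbours. The hypothesis $\mu\ge1$ means in particular that there exist distinct non-adjacent vertices (so $G$ is not complete) and that $G$ is connected. For a connected graph $G=(V,E)$ with $|V|\ge2$, let $D=[d(x,y)]_{x,y\in V}$ be its distance matrix ($d$ the graph distance), and define the quadratic embedding constant \[ \mathrm{QEC}(G)=\max\{\langle f,Df\rangle : f\in\mathbb{R}^V,\ \langle f,f\rangle=1,\ \langle \mathbf{1},f\rangle=0\}, \] where $\mathbf 1$ is the all-ones vector and $\langle\cdot,\cdot\rangle$ the standard inner product. *)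

theory Defs
  imports "HOL-Analysis.Analysis"
begin

definition simple_graph :: "'a set \<Rightarrow> ('a \<Rightarrow> 'a \<Rightarrow> bool) \<Rightarrow> bool" where
  "simple_graph V E \<longleftrightarrow> finite V \<and> (\<forall>x y. E x y \<longrightarrow> x \<in> V \<and> y \<in> V)
     \<and> (\<forall>x y. E x y \<longrightarrow> E y x) \<and> (\<forall>x. \<not> E x x)"

definition nbrs :: "'a set \<Rightarrow> ('a \<Rightarrow> 'a \<Rightarrow> bool) \<Rightarrow> 'a \<Rightarrow> 'a set" where
  "nbrs V E x = {y \<in> V. E x y}"

definition strongly_regular ::
  "'a set \<Rightarrow> ('a \<Rightarrow> 'a \<Rightarrow> bool) \<Rightarrow> nat \<Rightarrow> nat \<Rightarrow> nat \<Rightarrow> nat \<Rightarrow> bool" where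
  "strongly_regular V E n k lam mu \<longleftrightarrow> simple_graph V E \<and> card V = n
     \<and> (\<forall>x\<in>V. card (nbrs V E x) = k)
     \<and> (\<forall>x\<in>V. \<forall>y\<in>V. E x y \<longrightarrow> card (nbrs V E x \<inter> nbrs V E y) = lam)
     \<and> (\<forall>x\<in>V. \<forall>y\<in>V. x \<noteq> y \<longrightarrow> \<not> E x y \<longrightarrow> card (nbrs V E x \<inter> nbrs V E y) = mu)"

definition walk_of_length :: "'a set \<Rightarrow> ('a \<Rightarrow> 'a \<Rightarrow> bool) \<Rightarrow> 'a \<Rightarrow> 'a \<Rightarrow> nat \<Rightarrow> bool" where
  "walk_of_length V E x y m \<longleftrightarrow> (\<exists>p :: nat \<Rightarrow> 'a. p 0 = x \<and> p m = y
     \<and> (\<forall>i\<le>m. p i \<in> V) \<and> (\<forall>i<m. E (p i) (p (Suc i))))"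

text \<open>Graph distance (meaningful for connected graphs).\<close>
definition graph_dist :: "'a set \<Rightarrow> ('a \<Rightarrow> 'a \<Rightarrow> bool) \<Rightarrow> 'a \<Rightarrow> 'a \<Rightarrow> nat" where
  "graph_dist V E x y = (LEAST m. walk_of_length V E x y m)"

text \<open>Quadratic embedding constant: the maximum of <f, D f> over
  f : V \<rightarrow> R with <f,f> = 1 and <1,f> = 0 (rendered as a Sup; the maximum is attained).\<close>
definition QEC :: "'a set \<Rightarrow> ('a \<Rightarrow> 'a \<Rightarrow> bool) \<Rightarrow> real" where
  "QEC V E = Sup {(\<Sum>x\<in>V. \<Sum>y\<in>V. real (graph_dist V E x y) * f x * f y) | f :: 'a \<Rightarrow> real.
      (\<Sum>x\<in>V. (f x)\<^sup>2) = 1 \<and> (\<Sum>x\<in>V. f x) = 0}"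

end

theory Submission
  imports Defs
begin

locale srgl =
  fixes V :: "'a set" and E :: "'a \<Rightarrow> 'a \<Rightarrow> bool" and n k lam mu :: nat
  assumes srg: "strongly_regular V E n k lam mu"
begin

definition adj :: "'a \<Rightarrow> 'a \<Rightarrow> real" where "adj x y = (if E x y then 1 else 0)"
definition Af :: "('a \<Rightarrow> real) \<Rightarrow> 'a \<Rightarrow> real" where "Af f x = (\<Sum>y\<in>V. adj x y * f y)"
definition ip :: "('a \<Rightarrow> real) \<Rightarrow> ('a \<Rightarrow> real) \<Rightarrow> real" where "ip f g = (\<Sum>x\<in>V. f x * g x)"

lemma fin: "finite V" using srg unfolding strongly_regular_def simple_graph_def by blast
lemma symE: "E x y \<Longrightarrow> E y x" using srg unfolding strongly_regular_def simple_graph_def by blast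
lemma irr: "\<not> E x x" using srg unfolding strongly_regular_def simple_graph_def by blast
lemma inV: "E x y \<Longrightarrow> x \<in> V \<and> y \<in> V" using srg unfolding strongly_regular_def simple_graph_def by blast
lemma degk: "x \<in> V \<Longrightarrow> card (nbrs V E x) = k" using srg unfolding strongly_regular_def by blast
lemma lamc: "x \<in> V \<Longrightarrow> y \<in> V \<Longrightarrow> E x y \<Longrightarrow> card (nbrs V E x \<inter> nbrs V E y) = lam"
  using srg unfolding strongly_regular_def by blast
lemma muc: "x \<in> V \<Longrightarrow> y \<in> V \<Longrightarrow> x \<noteq> y \<Longrightarrow> \<not> E x y \<Longrightarrow> card (nbrs V E x \<inter> nbrs V E y) = mu"
  using srg unfolding strongly_regular_def by blast

lemma adj_sym: "adj x y = adj y x" unfolding adj_def using symE by auto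

lemma sum_ind: "(\<Sum>z\<in>V. if P z then 1 else 0) = real (card {z\<in>V. P z})"
proof -
  have "{z\<in>V. P z} = V \<inter> {z. P z}" by auto
  then show ?thesis using fin by (simp add: sum.If_cases)
qed

lemma cnt:
  assumes "x \<in> V" "y \<in> V"
  shows "(\<Sum>z\<in>V. adj x z * adj z y) = real mu + (if x = y then real k - real mu else 0)
          + (if E x y then real lam - real mu else 0)"
proof -
  have "(\<Sum>z\<in>V. adj x z * adj z y) = (\<Sum>z\<in>V. if E x z \<and> E y z then 1 else 0)"
    by (rule sum.cong) (auto simp: adj_def dest: symE)
  also have "\<dots> = real (card (nbrs V E x \<inter> nbrs V E y))"
  proof -
    have "{z\<in>V. E x z \<and> E y z} = nbrs V E x \<inter> nbrs V E y" unfolding nbrs_def by auto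
    then show ?thesis by (simp add: sum_ind)
  qed
  also have "\<dots> = real mu + (if x = y then real k - real mu else 0)
          + (if E x y then real lam - real mu else 0)"
    using assms degk lamc muc irr by auto
  finally show ?thesis .
qed

lemma deg_sum: "y \<in> V \<Longrightarrow> (\<Sum>x\<in>V. adj x y) = real k"
proof -
  assume y: "y \<in> V"
  have "(\<Sum>x\<in>V. adj x y) = (\<Sum>x\<in>V. if E y x then 1 else 0)"
    by (rule sum.cong) (auto simp: adj_def dest: symE)
  also have "\<dots> = real (card (nbrs V E y))" by (simp add: sum_ind nbrs_def)
  finally show ?thesis using degk y by simp
qed

lemma AA:
  assumes "x \<in> V" "(\<Sum>y\<in>V. f y) = 0"
  shows "Af (Af f) x = (real k - real mu) * f x + (real lam - real mu) * Af f x"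
proof -
  have "Af (Af f) x = (\<Sum>z\<in>V. \<Sum>y\<in>V. adj x z * adj z y * f y)"
    unfolding Af_def by (simp add: sum_distrib_left mult.assoc)
  also have "\<dots> = (\<Sum>y\<in>V. (\<Sum>z\<in>V. adj x z * adj z y) * f y)"
    by (subst sum.swap) (simp add: sum_distrib_right)
  also have "\<dots> = (\<Sum>y\<in>V. real mu * f y + (if x = y then (real k - real mu) * f y else 0)
          + (real lam - real mu) * (adj x y * f y))"
  proof (rule sum.cong)
    fix y assume y: "y \<in> V"
    show "(\<Sum>z\<in>V. adj x z * adj z y) * f y = real mu * f y + (if x = y then (real k - real mu) * f y else 0)
          + (real lam - real mu) * (adj x y * f y)"
      unfolding cnt[OF assms(1) y] by (simp add: adj_def algebra_simps)
  qed simp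
  also have "\<dots> = real mu * (\<Sum>y\<in>V. f y) + (real k - real mu) * f x + (real lam - real mu) * Af f x"
  proof -
    have z: "(\<Sum>y\<in>V. real mu * f y) = 0" using assms by (simp flip: sum_distrib_left)
    show ?thesis using assms fin z by (simp add: sum.distrib sum_distrib_left Af_def)
  qed
  finally show ?thesis using assms by simp
qed

lemma Af_sym: "ip (Af f) g = ip f (Af g)"
proof -
  have "ip (Af f) g = (\<Sum>x\<in>V. \<Sum>y\<in>V. adj x y * f y * g x)"
    unfolding ip_def Af_def by (simp add: sum_distrib_right)
  also have "\<dots> = (\<Sum>y\<in>V. \<Sum>x\<in>V. adj y x * f y * g x)"
    by (subst sum.swap) (simp add: adj_sym)
  also have "\<dots> = ip f (Af g)"
    unfolding ip_def Af_def by (simp add: sum_distrib_left mult_ac)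
  finally show ?thesis .
qed

lemma Af_lin: "Af (\<lambda>x. a x - c * b x) y = Af a y - c * Af b y"
  unfolding Af_def by (simp add: sum_subtractf sum_distrib_left algebra_simps)

lemma sum_Af: "(\<Sum>x\<in>V. Af f x) = real k * (\<Sum>y\<in>V. f y)"
proof -
  have "(\<Sum>x\<in>V. Af f x) = (\<Sum>y\<in>V. (\<Sum>x\<in>V. adj x y) * f y)"
    unfolding Af_def by (subst sum.swap) (simp add: sum_distrib_right)
  also have "\<dots> = (\<Sum>y\<in>V. real k * f y)" by (rule sum.cong) (auto simp: deg_sum)
  finally show ?thesis by (simp add: sum_distrib_left)
qed


lemma Af_scale: "Af (\<lambda>w. c * g w) x = c * Af g x"
  unfolding Af_def by (simp add: sum_distrib_left mult_ac)

lemma walk0: "walk_of_length V E x y 0 \<Longrightarrow> x = y"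
  unfolding walk_of_length_def by auto

lemma walk1: "walk_of_length V E x y 1 \<Longrightarrow> E x y"
  unfolding walk_of_length_def by auto

lemma dist:
  assumes "x \<in> V" "y \<in> V" "mu \<ge> 1"
  shows "real (graph_dist V E x y) = 2 - 2 * (if x = y then 1 else 0) - adj x y"
proof (cases "x = y")
  case True
  have "walk_of_length V E x y 0" unfolding walk_of_length_def
    by (rule exI[of _ "\<lambda>_. x"]) (use True assms in auto)
  then have "graph_dist V E x y = 0" unfolding graph_dist_def by (rule Least_equality) auto
  then show ?thesis using True irr by (simp add: adj_def)
next
  case False
  show ?thesis
  proof (cases "E x y")
    case True
    have "walk_of_length V E x y 1" unfolding walk_of_length_def
      by (rule exI[of _ "\<lambda>i. if i = 0 then x else y"]) (use True assms in auto)
    moreover have "\<And>m. walk_of_length V E x y m \<Longrightarrow> 1 \<le> m"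
      using walk0 False by (metis less_one not_le)
    ultimately have "graph_dist V E x y = 1" unfolding graph_dist_def by (rule Least_equality)
    then show ?thesis using True False by (simp add: adj_def)
  next
    case nE: False
    have "card (nbrs V E x \<inter> nbrs V E y) = mu" using muc assms False nE by blast
    then have "nbrs V E x \<inter> nbrs V E y \<noteq> {}" using assms(3) by auto
    then obtain z where z: "z \<in> V" "E x z" "E y z" unfolding nbrs_def by auto
    have "walk_of_length V E x y 2" unfolding walk_of_length_def
    proof (rule exI[of _ "\<lambda>i. if i = 0 then x else if i = 1 then z else y"], intro conjI allI impI)
      fix i :: nat assume "i < 2"
      then have "i = 0 \<or> i = 1" by auto
      then show "E ((\<lambda>i. if i = 0 then x else if i = 1 then z else y) i)
          ((\<lambda>i. if i = 0 then x else if i = 1 then z else y) (Suc i))"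
        using z symE by auto
    qed (use assms z in auto)
    moreover have "\<And>m. walk_of_length V E x y m \<Longrightarrow> 2 \<le> m"
    proof -
      fix m assume w: "walk_of_length V E x y m"
      show "2 \<le> m"
      proof (rule ccontr)
        assume "\<not> 2 \<le> m"
        then have "m = 0 \<or> m = 1" by auto
        then show False using w walk0 walk1 False nE by auto
      qed
    qed
    ultimately have "graph_dist V E x y = 2" unfolding graph_dist_def by (rule Least_equality)
    then show ?thesis using nE False by (simp add: adj_def)
  qed
qed

lemma qf:
  assumes "(\<Sum>y\<in>V. f y) = 0" "mu \<ge> 1"
  shows "(\<Sum>x\<in>V. \<Sum>y\<in>V. real (graph_dist V E x y) * f x * f y) = -2 * ip f f - ip f (Af f)"
proof -
  have "\<And>x. x \<in> V \<Longrightarrow> (\<Sum>y\<in>V. real (graph_dist V E x y) * f x * f y)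
      = -2 * (f x * f x) - f x * Af f x"
  proof -
    fix x assume x: "x \<in> V"
    have "(\<Sum>y\<in>V. real (graph_dist V E x y) * f x * f y)
        = (\<Sum>y\<in>V. 2 * f x * f y - (if x = y then 2 * f x * f y else 0) - f x * (adj x y * f y))"
    proof (rule sum.cong)
      fix y assume y: "y \<in> V"
      show "real (graph_dist V E x y) * f x * f y = 2 * f x * f y - (if x = y then 2 * f x * f y else 0) - f x * (adj x y * f y)"
        unfolding dist[OF x y assms(2)] by (simp add: algebra_simps)
    qed simp
    also have "\<dots> = 2 * f x * (\<Sum>y\<in>V. f y) - 2 * f x * f x - f x * Af f x"
      using x fin by (simp add: sum_subtractf sum_distrib_left Af_def)
    finally show "(\<Sum>y\<in>V. real (graph_dist V E x y) * f x * f y)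
      = -2 * (f x * f x) - f x * Af f x" using assms by simp
  qed
  then have "(\<Sum>x\<in>V. \<Sum>y\<in>V. real (graph_dist V E x y) * f x * f y)
     = (\<Sum>x\<in>V. -2 * (f x * f x) - f x * Af f x)" by (rule sum.cong[OF refl])
  also have "\<dots> = -2 * ip f f - ip f (Af f)"
    unfolding ip_def by (simp add: sum_subtractf sum_distrib_left)
  finally show ?thesis .
qed

end

lemma quad_aux:
  fixes q a b :: real
  assumes "q * q = a\<^sup>2 + 4 * b"
  shows "(a - q) / 2 * ((a - q) / 2) = a * ((a - q) / 2) + b"
  using assms by (simp add: field_simps power2_eq_square)

locale srgl2 = srgl +
  assumes mu1: "mu \<ge> 1"
    and nonadj: "\<exists>x\<in>V. \<exists>y\<in>V. x \<noteq> y \<and> \<not> E x y"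
begin

definition "d = real lam - real mu"
definition "c = real k - real mu"
definition "Dl = (real lam - real mu)\<^sup>2 + 4 * (real k - real mu)"
definition "s = (real lam - real mu - sqrt Dl) / 2"

lemma kmu: "mu \<le> k"
proof -
  obtain x y where xy: "x \<in> V" "y \<in> V" "x \<noteq> y" "\<not> E x y" using nonadj by blast
  have "finite (nbrs V E x)" using fin unfolding nbrs_def by auto
  then have "card (nbrs V E x \<inter> nbrs V E y) \<le> card (nbrs V E x)" by (intro card_mono) auto
  then show ?thesis using muc[OF xy] degk[OF xy(1)] by simp
qed

lemma Dl_nn: "Dl \<ge> 0" using kmu unfolding Dl_def by simp

lemma sqD: "sqrt Dl = d - 2 * s" unfolding s_def d_def by (simp add: field_simps)

lemma s_sq: "s * s = d * s + c"
proof -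
  have q: "sqrt Dl * sqrt Dl = (real lam - real mu)\<^sup>2 + 4 * (real k - real mu)" using Dl_nn Dl_def by simp
  show ?thesis unfolding s_def d_def c_def using quad_aux[OF q] .
qed

lemma lb:
  assumes "(\<Sum>y\<in>V. f y) = 0"
  shows "ip f (Af f) \<ge> s * ip f f"
proof -
  define g where "g = (\<lambda>x. Af f x - s * f x)"
  have ipfg: "ip f g = ip f (Af f) - s * ip f f"
    unfolding ip_def g_def by (simp add: algebra_simps sum_subtractf sum_distrib_left)
  have "ip (Af f) g - s * ip f g = (\<Sum>x\<in>V. Af f x * g x - s * (f x * g x))"
    by (simp add: ip_def sum_subtractf sum_distrib_left)
  also have "\<dots> = ip g g" unfolding ip_def g_def by (rule sum.cong) (auto simp: algebra_simps)
  finally have "ip g g = ip (Af f) g - s * ip f g" by simp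
  also have "\<dots> = ip f (Af g) - s * ip f g" by (simp add: Af_sym)
  also have "\<dots> = ip f (\<lambda>x. sqrt Dl * g x)"
  proof -
    have "\<And>x. x \<in> V \<Longrightarrow> Af g x - s * g x = sqrt Dl * g x"
    proof -
      fix x assume x: "x \<in> V"
      have "Af g x = Af (Af f) x - s * Af f x" unfolding g_def by (rule Af_lin)
      then have "Af g x - s * g x = c * f x + d * Af f x - 2 * s * Af f x + s * s * f x"
        using AA[OF x assms] unfolding g_def c_def d_def by (simp add: algebra_simps)
      also have "\<dots> = (d - 2 * s) * (Af f x - s * f x)" using s_sq by (simp add: algebra_simps)
      finally show "Af g x - s * g x = sqrt Dl * g x" using sqD unfolding g_def by simp
    qed
    then have "ip f (\<lambda>x. Af g x - s * g x) = ip f (\<lambda>x. sqrt Dl * g x)"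
      unfolding ip_def by (intro sum.cong) auto
    moreover have "ip f (\<lambda>x. Af g x - s * g x) = ip f (Af g) - s * ip f g"
      unfolding ip_def by (simp add: algebra_simps sum_subtractf sum_distrib_left)
    ultimately show ?thesis by simp
  qed
  also have "\<dots> = sqrt Dl * ip f g" unfolding ip_def by (simp add: sum_distrib_left mult_ac)
  finally have gg: "ip g g = sqrt Dl * ip f g" .
  have gnn: "ip g g \<ge> 0" unfolding ip_def by (intro sum_nonneg) auto
  show ?thesis
  proof (cases "sqrt Dl = 0")
    case True
    then have "ip g g = 0" using gg by simp
    then have "\<forall>x\<in>V. g x * g x = 0" unfolding ip_def
      using sum_nonneg_eq_0_iff[OF fin, of "\<lambda>x. g x * g x"] by auto
    then have "ip f g = 0" unfolding ip_def by simp
    then show ?thesis using ipfg by simp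
  next
    case False
    then have "sqrt Dl > 0" using Dl_nn by (simp add: less_le)
    then have "ip f g \<ge> 0" using gg gnn by (simp add: zero_le_mult_iff)
    then show ?thesis using ipfg by simp
  qed
qed

lemma attain: "\<exists>f. ip f f = 1 \<and> (\<Sum>y\<in>V. f y) = 0 \<and> ip f (Af f) = s"
proof -
  define r where "r = d - s"
  obtain x0 y0 where xy: "x0 \<in> V" "y0 \<in> V" "x0 \<noteq> y0" "\<not> E x0 y0" using nonadj by blast
  have "\<exists>a. a \<in> V \<and> a \<noteq> x0 \<and> adj x0 a + r \<noteq> 0"
  proof (cases "r = 0")
    case True
    have "card (nbrs V E x0 \<inter> nbrs V E y0) = mu" using muc xy by blast
    then have "nbrs V E x0 \<inter> nbrs V E y0 \<noteq> {}" using mu1 by auto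
    then obtain z where z: "z \<in> V" "E x0 z" unfolding nbrs_def by auto
    then show ?thesis using True irr by (intro exI[of _ z]) (auto simp: adj_def)
  next
    case False
    then show ?thesis using xy by (intro exI[of _ y0]) (auto simp: adj_def)
  qed
  then obtain a where a: "a \<in> V" "a \<noteq> x0" "adj x0 a + r \<noteq> 0" by blast
  define v where "v = (\<lambda>w. (if w = x0 then 1 else 0) - (if w = a then 1 else (0::real)))"
  have sv: "(\<Sum>y\<in>V. v y) = 0" unfolding v_def using fin a xy by (simp add: sum_subtractf)
  define g where "g = (\<lambda>w. Af v w - r * v w)"
  have "Af v x0 = (\<Sum>y\<in>V. (if y = x0 then adj x0 y else 0) - (if y = a then adj x0 y else 0))"
    unfolding Af_def v_def by (rule sum.cong) auto
  also have "\<dots> = adj x0 x0 - adj x0 a" using fin a xy by (simp add: sum_subtractf)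
  finally have Avx: "Af v x0 = - adj x0 a" using irr by (simp add: adj_def)
  have gx: "g x0 \<noteq> 0" unfolding g_def using Avx a by (simp add: v_def)
  have sg: "(\<Sum>y\<in>V. g y) = 0" unfolding g_def using sv by (simp add: sum_subtractf sum_Af flip: sum_distrib_left)
  have Ag: "\<And>w. w \<in> V \<Longrightarrow> Af g w = s * g w"
  proof -
    fix w assume w: "w \<in> V"
    have "Af g w = Af (Af v) w - r * Af v w" unfolding g_def by (rule Af_lin)
    also have "\<dots> = c * v w + d * Af v w - r * Af v w" using AA[OF w sv] unfolding c_def d_def by simp
    also have "\<dots> = s * g w + (c + r * s) * v w + (d - r - s) * Af v w" unfolding g_def by (simp add: algebra_simps)
    also have "c + r * s = 0" unfolding r_def using s_sq by (simp add: algebra_simps)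
    also have "d - r - s = 0" unfolding r_def by simp
    finally show "Af g w = s * g w" by simp
  qed
  have gpos: "ip g g > 0" unfolding ip_def
    by (rule sum_pos2[OF fin xy(1)]) (use gx in \<open>auto simp: zero_less_mult_iff\<close>)
  define t where "t = 1 / sqrt (ip g g)"
  have tt: "t * t * ip g g = 1" unfolding t_def using gpos
    by (simp add: field_simps)
  define f where "f = (\<lambda>w. t * g w)"
  have "ip f f = t * t * ip g g" unfolding f_def ip_def by (simp add: sum_distrib_left mult_ac)
  moreover have "(\<Sum>y\<in>V. f y) = 0" unfolding f_def using sg by (simp flip: sum_distrib_left)
  moreover have "ip f (Af f) = s * (t * t * ip g g)"
  proof -
    have "ip f (Af f) = (\<Sum>w\<in>V. t * g w * (t * (s * g w)))"
      unfolding ip_def f_def Af_scale by (rule sum.cong) (auto simp: Ag)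
    then show ?thesis unfolding ip_def by (simp add: sum_distrib_left mult_ac)
  qed
  ultimately show ?thesis using tt by (intro exI[of _ f]) simp
qed

end


theorem theorem1p1:
  fixes V :: "'a set" and E :: "'a \<Rightarrow> 'a \<Rightarrow> bool" and n k lam mu :: nat
  assumes "strongly_regular V E n k lam mu"
    and "mu \<ge> 1"
    and "\<exists>x\<in>V. \<exists>y\<in>V. x \<noteq> y \<and> \<not> E x y"
  shows "QEC V E = -2 - (real lam - real mu
            - sqrt ((real lam - real mu)\<^sup>2 + 4 * (real k - real mu))) / 2"
proof -
  interpret srgl2 V E n k lam mu using assms by (unfold_locales) auto
  let ?S = "{(\<Sum>x\<in>V. \<Sum>y\<in>V. real (graph_dist V E x y) * f x * f y) | f :: 'a \<Rightarrow> real.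
      (\<Sum>x\<in>V. (f x)\<^sup>2) = 1 \<and> (\<Sum>x\<in>V. f x) = 0}"
  have ipsq: "\<And>f. ip f f = (\<Sum>x\<in>V. (f x)\<^sup>2)" unfolding ip_def by (simp add: power2_eq_square)
  have "Sup ?S = -2 - s"
  proof (rule cSup_eq_maximum)
    obtain f where f: "ip f f = 1" "(\<Sum>y\<in>V. f y) = 0" "ip f (Af f) = s" using attain by blast
    then show "-2 - s \<in> ?S" using qf[OF f(2) mu1] ipsq by force
  next
    fix z assume "z \<in> ?S"
    then obtain f where f: "(\<Sum>x\<in>V. (f x)\<^sup>2) = 1" "(\<Sum>x\<in>V. f x) = 0"
      and z: "z = (\<Sum>x\<in>V. \<Sum>y\<in>V. real (graph_dist V E x y) * f x * f y)" by blast
    have "ip f f = 1" using f ipsq by simp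
    then show "z \<le> -2 - s" using z qf[OF f(2) mu1] lb[OF f(2)] by simp
  qed
  then show ?thesis unfolding QEC_def s_def Dl_def by simp
qed

end
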